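(* Let $H$ be a Hermitian operator (Hamiltonian) on $\mathbb{C}^d$, let $\{\mathcal{O}_i\}_{i\in\mathcal{I}}$ be a finite family of Hermitian operators on $\mathbb{C}^d$ indexed by a finite set $\mathcal{I}$, and let $\rho$ be a density matrix on $\mathbb{C}^d$ with $o_i=\mathrm{tr}(\rho\,\mathcal{O}_i)$ for all $i\in\mathcal{I}$. Define the feasible set $$\Omega_{\mathcal{I}}=\{X:\ X\succeq 0,\ \mathrm{tr}(X)=1,\ \mathrm{tr}(X\mathcal{O}_i)=o_i\ \forall i\in\mathcal{I}\}.$$ Then for every unitary $U\in\mathcal{U}(d)$, $$\min_{X\in\Omega_{\mathcal{I}}}\big[\mathrm{tr}(HX)-\mathrm{tr}(HUXU^\dagger)\big]\ \le\ \min_{X\in\Omega_{\mathcal{I}}}\max_{V\in\mathcal{U}(d)}\big[\mathrm{tr}(HX)-\mathrm{tr}(HVXV^\dagger)\big]\ \le\ \mathcal{E}(\rho,H).$$ In particular, if $\tilde\rho\in\Omega_{\mathcal{I}}$ is any feasible state (e.g. a minimizer over $\Omega_{\mathcal{I}}$ of some linear function, or of the purity $\mathrm{tr}(X^2)$), with spectral decomposition $\tilde\rho=\sum_j\tilde r_j|\tilde r_j\rangle\langle\tilde r_j|$, $\tilde r_1\ge\tilde r_2\ge\cdots$, and $H=\sum_j E_j|E_j\rangle\langle E_j|$ with $E_1\le E_2\le\cdots$, and $\tilde U_\star=\sum_j|E_j\rangle\langle\tilde r_j|$, then $$\mathcal{E}_{\rm LB}:=\min_{X\in\Omega_{\mathcal{I}}}\big[\mathrm{tr}(HX)-\mathrm{tr}(H\tilde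 U_\star X\tilde U_\star^\dagger)\big]\ \le\ \mathcal{E}(\rho,H).$$
   Context: For a density matrix $\rho$ on $\mathbb{C}^d$ and a Hamiltonian $H$, the ergotropy is $\mathcal{E}(\rho,H)=\max_{U\in\mathcal{U}(d)}\big[\mathrm{tr}(\rho H)-\mathrm{tr}(HU\rho U^\dagger)\big]$, where $\mathcal{U}(d)$ is the group of $d\times d$ unitaries. *)

theory Defs
  imports "HOL-Analysis.Analysis"
begin

text \<open>Complex d x d matrices are modelled as complex^'n^'n with d = CARD('n).\<close>

definition cadj :: "complex^'n^'m \<Rightarrow> complex^'m^'n" where
  "cadj A = (\<chi> i j. cnj (A $ j $ i))"

definition cinner_vec :: "complex^'n \<Rightarrow> complex^'n \<Rightarrow> complex" where
  "cinner_vec u v = (\<Sum>i\<in>UNIV. cnj (u $ i) * v $ i)"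

definition outer :: "complex^'n \<Rightarrow> complex^'n \<Rightarrow> complex^'n^'n" where
  "outer u v = (\<chi> i k. u $ i * cnj (v $ k))"

definition hermitian :: "complex^'n^'n \<Rightarrow> bool" where
  "hermitian A \<longleftrightarrow> cadj A = A"

definition psd :: "complex^'n^'n \<Rightarrow> bool" where
  "psd X \<longleftrightarrow> hermitian X \<and> (\<forall>v. 0 \<le> Re (cinner_vec v (X *v v)))"

definition unitary :: "complex^'n^'n \<Rightarrow> bool" where
  "unitary U \<longleftrightarrow> cadj U ** U = mat 1"

definition density :: "complex^'n^'n \<Rightarrow> bool" where
  "density \<rho> \<longleftrightarrow> psd \<rho> \<and> trace \<rho> = 1"

text \<open>Work extracted by U from state X: tr(HX) - tr(H U X U^dagger) (real for Hermitian H, X).\<close>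
definition work :: "complex^'n^'n \<Rightarrow> complex^'n^'n \<Rightarrow> complex^'n^'n \<Rightarrow> real" where
  "work H X U = Re (trace (H ** X) - trace (H ** U ** X ** cadj U))"

definition ergotropy :: "complex^'n^'n \<Rightarrow> complex^'n^'n \<Rightarrow> real" where
  "ergotropy \<rho> H = (SUP U\<in>{U. unitary U}. work H \<rho> U)"

definition feasible :: "'i set \<Rightarrow> ('i \<Rightarrow> complex^'n^'n) \<Rightarrow> ('i \<Rightarrow> complex) \<Rightarrow> (complex^'n^'n) set" where
  "feasible I Obs ov = {X. psd X \<and> trace X = 1 \<and> (\<forall>i\<in>I. trace (X ** Obs i) = ov i)}"

end

theory Submission
  imports Defs
begin

lemma cadj_cadj[simp]: "cadj (cadj A) = A"
  by (simp add: cadj_def vec_eq_iff)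

lemma cadj_mult: "cadj (A ** B) = cadj B ** cadj A"
  by (simp add: cadj_def matrix_matrix_mult_def vec_eq_iff mult.commute)

lemma cinner_adj: "cinner_vec u (A *v w) = cinner_vec (cadj A *v u) w"
proof -
  have "cinner_vec u (A *v w) = (\<Sum>i\<in>UNIV. \<Sum>k\<in>UNIV. cnj (u$i) * A$i$k * w$k)"
    unfolding cinner_vec_def matrix_vector_mult_def by (simp add: sum_distrib_left mult.assoc)
  also have "\<dots> = (\<Sum>k\<in>UNIV. \<Sum>i\<in>UNIV. cnj (u$i) * A$i$k * w$k)"
    by (rule sum.swap)
  also have "\<dots> = cinner_vec (cadj A *v u) w"
    unfolding cinner_vec_def matrix_vector_mult_def cadj_def by (simp add: sum_distrib_left sum_distrib_right mult_ac)
  finally show ?thesis .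
qed


lemma psd_conj:
  assumes "unitary V" "psd X"
  shows "psd (V ** X ** cadj V)"
proof -
  have h: "cadj X = X" using assms(2) by (simp add: psd_def hermitian_def)
  have "cadj (V ** X ** cadj V) = V ** X ** cadj V"
    by (simp add: cadj_mult h matrix_mul_assoc)
  moreover have "0 \<le> Re (cinner_vec v ((V ** X ** cadj V) *v v))" for v
  proof -
    have "(V ** X ** cadj V) *v v = V *v (X *v (cadj V *v v))"
      by (simp add: matrix_vector_mul_assoc matrix_mul_assoc)
    then have "cinner_vec v ((V ** X ** cadj V) *v v) = cinner_vec (cadj V *v v) (X *v (cadj V *v v))"
      by (simp add: cinner_adj)
    then show ?thesis using assms(2) by (simp add: psd_def)
  qed
  ultimately show ?thesis by (simp add: psd_def hermitian_def)
qed

lemma trace_conj: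
  assumes "unitary V"
  shows "trace (V ** X ** cadj V) = trace X"
proof -
  have "trace (V ** X ** cadj V) = trace (cadj V ** (V ** X))" by (rule trace_mul_sym)
  also have "\<dots> = trace X" using assms by (simp add: matrix_mul_assoc unitary_def)
  finally show ?thesis .
qed

lemma sum_two:
  fixes x y :: complex and i j :: "'n::finite"
  assumes "i \<noteq> j"
  shows "(\<Sum>k\<in>UNIV. if k = i then x else if k = j then y else 0) = x + y"
proof -
  have "(\<Sum>k\<in>UNIV. if k = i then x else if k = j then y else 0)
      = (\<Sum>k\<in>{i,j}. if k = i then x else if k = j then y else 0)"
    by (rule sum.mono_neutral_right) auto
  also have "\<dots> = x + y" using assms by simp
  finally show ?thesis .
qed

lemma quad_two:
  fixes Y :: "complex^'n::finite^'n"
  assumes "i \<noteq> j"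
  shows "cinner_vec (\<chi> k. if k = i then a else if k = j then b else 0)
     (Y *v (\<chi> k. if k = i then a else if k = j then b else 0))
   = cnj a * (Y$i$i * a + Y$i$j * b) + cnj b * (Y$j$i * a + Y$j$j * b)"
proof -
  define v :: "complex^'n" where "v = (\<chi> k. if k = i then a else if k = j then b else 0)"
  have m: "(Y *v v) $ r = Y$r$i * a + Y$r$j * b" for r
  proof -
    have "(Y *v v) $ r = (\<Sum>k\<in>UNIV. Y$r$k * v$k)" by (simp add: matrix_vector_mult_def)
    also have "\<dots> = (\<Sum>k\<in>UNIV. if k = i then Y$r$i * a else if k = j then Y$r$j * b else 0)"
      by (rule sum.cong) (auto simp: v_def)
    also have "\<dots> = Y$r$i * a + Y$r$j * b" by (rule sum_two[OF assms])
    finally show ?thesis .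
  qed
  have "cinner_vec v (Y *v v) = (\<Sum>r\<in>UNIV. cnj (v$r) * (Y$r$i * a + Y$r$j * b))"
    by (simp add: cinner_vec_def m)
  also have "\<dots> = (\<Sum>r\<in>UNIV. if r = i then cnj a * (Y$i$i * a + Y$i$j * b)
       else if r = j then cnj b * (Y$j$i * a + Y$j$j * b) else 0)"
    by (rule sum.cong) (auto simp: v_def)
  also have "\<dots> = cnj a * (Y$i$i * a + Y$i$j * b) + cnj b * (Y$j$i * a + Y$j$j * b)"
    by (rule sum_two[OF assms])
  finally show ?thesis unfolding v_def .
qed

lemma quad_one:
  fixes Y :: "complex^'n::finite^'n"
  shows "cinner_vec (\<chi> k. if k = i then 1 else 0) (Y *v (\<chi> k. if k = i then 1 else 0)) = Y$i$i"
proof -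
  define v :: "complex^'n" where "v = (\<chi> k. if k = i then 1 else 0)"
  have m: "(Y *v v) $ r = Y$r$i" for r
  proof -
    have "(Y *v v) $ r = (\<Sum>k\<in>UNIV. Y$r$k * v$k)" by (simp add: matrix_vector_mult_def)
    also have "\<dots> = (\<Sum>k\<in>UNIV. if k = i then Y$r$i else 0)"
      by (rule sum.cong) (auto simp: v_def)
    finally show ?thesis by simp
  qed
  have "cinner_vec v (Y *v v) = (\<Sum>r\<in>UNIV. cnj (v$r) * Y$r$i)"
    by (simp add: cinner_vec_def m)
  also have "\<dots> = (\<Sum>r\<in>UNIV. if r = i then Y$i$i else 0)"
    by (rule sum.cong) (auto simp: v_def)
  finally show ?thesis unfolding v_def by simp
qed

lemma psd_entry_bound:
  fixes Y :: "complex^'n::finite^'n"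
  assumes "psd Y" "trace Y = 1"
  shows "cmod (Y$i$j) \<le> 2"
proof -
  have herm: "cnj (Y$b$a) = Y$a$b" for a b
    using assms(1) unfolding psd_def hermitian_def cadj_def by (metis vec_lambda_beta)
  have q: "0 \<le> Re (cinner_vec v (Y *v v))" for v using assms(1) by (simp add: psd_def)
  have dpos: "0 \<le> Re (Y$a$a)" for a using q[of "\<chi> k. if k = a then 1 else 0"] quad_one by metis
  have dim: "Im (Y$a$a) = 0" for a using herm[of a a] by (simp add: complex_eq_iff)
  have "(\<Sum>a\<in>UNIV. Re (Y$a$a)) = 1"
    using arg_cong[OF assms(2), of Re] by (simp add: trace_def)
  then have dle: "Re (Y$a$a) \<le> 1" for a
    using member_le_sum[of a UNIV "\<lambda>a. Re (Y$a$a)"] dpos by auto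
  show ?thesis
  proof (cases "i = j")
    case True
    then show ?thesis using dpos[of i] dle[of i] dim[of i] cmod_le[of "Y$i$i"] by auto
  next
    case False
    have key: "0 \<le> Re (Y$i$i) + Re (Y$j$j) + 2 * Re (c * Y$i$j)" if "cmod c = 1" for c
    proof -
      have "0 \<le> Re (cnj 1 * (Y$i$i * 1 + Y$i$j * c) + cnj c * (Y$j$i * 1 + Y$j$j * c))"
        using q[of "\<chi> k. if k = i then 1 else if k = j then c else 0"] quad_two[OF False] by metis
      moreover have "cnj c * c = 1" using that complex_norm_square[of c] by (simp add: mult.commute)
      moreover have "cnj c * (Y$j$j * c) = Y$j$j" using \<open>cnj c * c = 1\<close>
        by (metis mult.assoc mult.commute mult_1_right)
      moreover have "cnj c * Y$j$i = cnj (c * Y$i$j)" using herm[of i j] by simp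
      ultimately have "0 \<le> Re (Y$i$i + Y$j$j + (c * Y$i$j + cnj (c * Y$i$j)))"
        by (simp add: distrib_left)
      then show ?thesis by simp
    qed
    have r1: "-1 \<le> Re (Y$i$j)" using key[of 1] dle[of i] dle[of j] by simp
    have r2: "Re (Y$i$j) \<le> 1" using key[of "-1"] dle[of i] dle[of j] by simp
    have r3: "Im (Y$i$j) \<le> 1" using key[of "\<i>"] dle[of i] dle[of j] by simp
    have r4: "-1 \<le> Im (Y$i$j)" using key[of "-\<i>"] dle[of i] dle[of j] by simp
    show ?thesis using cmod_le[of "Y$i$j"] r1 r2 r3 r4 by linarith
  qed
qed

lemma trace_bound:
  fixes H Y :: "complex^'n::finite^'n"
  assumes "\<And>i j. cmod (Y$i$j) \<le> 2"
  shows "\<bar>Re (trace (H ** Y))\<bar> \<le> 2 * (\<Sum>i\<in>UNIV. \<Sum>k\<in>UNIV. cmod (H$i$k))"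
proof -
  have e: "trace (H ** Y) = (\<Sum>i\<in>UNIV. \<Sum>k\<in>UNIV. H$i$k * Y$k$i)"
    by (simp add: trace_def matrix_matrix_mult_def)
  have "\<bar>Re (trace (H ** Y))\<bar> \<le> cmod (\<Sum>i\<in>UNIV. \<Sum>k\<in>UNIV. H$i$k * Y$k$i)"
    unfolding e by (rule abs_Re_le_cmod)
  also have "\<dots> \<le> (\<Sum>i\<in>UNIV. cmod (\<Sum>k\<in>UNIV. H$i$k * Y$k$i))" by (rule norm_sum)
  also have "\<dots> \<le> (\<Sum>i\<in>UNIV. \<Sum>k\<in>UNIV. cmod (H$i$k) * 2)"
  proof (rule sum_mono)
    fix i
    have "cmod (\<Sum>k\<in>UNIV. H$i$k * Y$k$i) \<le> (\<Sum>k\<in>UNIV. cmod (H$i$k * Y$k$i))" by (rule norm_sum)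
    also have "\<dots> \<le> (\<Sum>k\<in>UNIV. cmod (H$i$k) * 2)"
      by (rule sum_mono) (simp add: norm_mult assms mult_left_mono)
    finally show "cmod (\<Sum>k\<in>UNIV. H$i$k * Y$k$i) \<le> (\<Sum>k\<in>UNIV. cmod (H$i$k) * 2)" .
  qed
  also have "\<dots> = 2 * (\<Sum>i\<in>UNIV. \<Sum>k\<in>UNIV. cmod (H$i$k))"
    by (simp add: sum_distrib_left mult.commute)
  finally show ?thesis .
qed

lemma work_bound:
  fixes H X V :: "complex^'n::finite^'n"
  assumes "psd X" "trace X = 1" "unitary V"
  shows "\<bar>work H X V\<bar> \<le> 4 * (\<Sum>i\<in>UNIV. \<Sum>k\<in>UNIV. cmod (H$i$k))"
proof -
  let ?B = "(\<Sum>i\<in>UNIV. \<Sum>k\<in>UNIV. cmod (H$i$k))"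
  have p: "psd (V ** X ** cadj V)" using psd_conj assms by blast
  have t: "trace (V ** X ** cadj V) = 1" using trace_conj assms by metis
  have a: "H ** V ** X ** cadj V = H ** (V ** X ** cadj V)" by (simp add: matrix_mul_assoc)
  have b1: "\<bar>Re (trace (H ** X))\<bar> \<le> 2 * ?B"
    by (rule trace_bound) (rule psd_entry_bound[OF assms(1,2)])
  have b2: "\<bar>Re (trace (H ** (V ** X ** cadj V)))\<bar> \<le> 2 * ?B"
    by (rule trace_bound) (rule psd_entry_bound[OF p t])
  show ?thesis unfolding work_def a using b1 b2 by simp
qed

lemma unitary_one: "unitary (mat 1 :: complex^'n::finite^'n)"
proof -
  have "cadj (mat 1 :: complex^'n^'n) = mat 1" by (simp add: cadj_def mat_def vec_eq_iff)
  then show ?thesis by (simp add: unitary_def)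
qed

lemma work_one: "work H X (mat 1 :: complex^'n::finite^'n) = 0"
proof -
  have "cadj (mat 1 :: complex^'n^'n) = mat 1" by (simp add: cadj_def mat_def vec_eq_iff)
  then show ?thesis by (simp add: work_def)
qed

lemma completeness:
  fixes rv :: "nat \<Rightarrow> complex^'n::finite"
  assumes "\<forall>j<CARD('n). \<forall>k<CARD('n). cinner_vec (rv j) (rv k) = (if j = k then 1 else 0)"
  shows "(\<Sum>j<CARD('n). rv j $ a * cnj (rv j $ b)) = (if a = b then 1 else 0)"
proof -
  obtain g where g: "bij_betw g (UNIV::'n set) {0..<CARD('n)}"
    using ex_bij_betw_finite_nat[of "UNIV::'n set"] by auto
  have gi: "inj g" using g bij_betw_def by blast
  have gr: "g k < CARD('n)" for k using g bij_betw_apply by fastforce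
  define W :: "complex^'n^'n" where "W = (\<chi> i k. rv (g k) $ i)"
  have "cadj W ** W = mat 1"
  proof -
    have "(cadj W ** W) $ k $ l = (if k = l then 1 else 0)" for k l
    proof -
      have "(cadj W ** W) $ k $ l = cinner_vec (rv (g k)) (rv (g l))"
        by (simp add: W_def cadj_def matrix_matrix_mult_def cinner_vec_def)
      also have "\<dots> = (if g k = g l then 1 else 0)" using assms gr by simp
      also have "\<dots> = (if k = l then 1 else 0)" using gi by (auto dest: injD)
      finally show ?thesis .
    qed
    then show ?thesis by (simp add: vec_eq_iff mat_def)
  qed
  then have "W ** cadj W = mat 1" using matrix_left_right_inverse by blast
  then have "(W ** cadj W) $ a $ b = (if a = b then 1 else 0)" by (simp add: mat_def)
  moreover have "(W ** cadj W) $ a $ b = (\<Sum>k\<in>UNIV. rv (g k) $ a * cnj (rv (g k) $ b))"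
    by (simp add: W_def cadj_def matrix_matrix_mult_def)
  moreover have "(\<Sum>k\<in>UNIV. rv (g k) $ a * cnj (rv (g k) $ b)) = (\<Sum>j\<in>{0..<CARD('n)}. rv j $ a * cnj (rv j $ b))"
    using sum.reindex_bij_betw[OF g, of "\<lambda>j. rv j $ a * cnj (rv j $ b)"] by simp
  ultimately show ?thesis by (simp add: atLeast0LessThan)
qed

lemma ustar_unitary:
  fixes rv ev :: "nat \<Rightarrow> complex^'n::finite"
  assumes orv: "\<forall>j<CARD('n). \<forall>k<CARD('n). cinner_vec (rv j) (rv k) = (if j = k then 1 else 0)"
    and oev: "\<forall>j<CARD('n). \<forall>k<CARD('n). cinner_vec (ev j) (ev k) = (if j = k then 1 else 0)"
  shows "unitary (\<Sum>j<CARD('n). outer (ev j) (rv j))"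
proof -
  define U where "U = (\<Sum>j<CARD('n). outer (ev j) (rv j))"
  define N where "N = CARD('n)"
  have Ue: "U $ m $ a = (\<Sum>j<N. ev j $ m * cnj (rv j $ a))" for m a
    by (simp add: U_def N_def outer_def)
  have "(cadj U ** U) $ a $ b = (if a = b then 1 else 0)" for a b
  proof -
    have "(cadj U ** U) $ a $ b = (\<Sum>m\<in>UNIV. (\<Sum>j<N. cnj (ev j $ m) * rv j $ a) * (\<Sum>k<N. ev k $ m * cnj (rv k $ b)))"
      by (simp add: matrix_matrix_mult_def cadj_def Ue)
    also have "\<dots> = (\<Sum>m\<in>UNIV. \<Sum>j<N. \<Sum>k<N. (cnj (ev j $ m) * rv j $ a) * (ev k $ m * cnj (rv k $ b)))"
      by (simp add: sum_product)
    also have "\<dots> = (\<Sum>j<N. \<Sum>m\<in>UNIV. \<Sum>k<N. (cnj (ev j $ m) * rv j $ a) * (ev k $ m * cnj (rv k $ b)))"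
      by (rule sum.swap)
    also have "\<dots> = (\<Sum>j<N. \<Sum>k<N. \<Sum>m\<in>UNIV. (cnj (ev j $ m) * rv j $ a) * (ev k $ m * cnj (rv k $ b)))"
      by (rule sum.cong[OF refl], rule sum.swap)
    also have "\<dots> = (\<Sum>j<N. \<Sum>k<N. (rv j $ a * cnj (rv k $ b)) * cinner_vec (ev j) (ev k))"
      by (simp add: cinner_vec_def sum_distrib_left mult_ac)
    also have "\<dots> = (\<Sum>j<N. \<Sum>k<N. (rv j $ a * cnj (rv k $ b)) * (if j = k then 1 else 0))"
      using oev by (intro sum.cong refl) (simp add: N_def)
    also have "\<dots> = (\<Sum>j<N. rv j $ a * cnj (rv j $ b))"
    proof (rule sum.cong[OF refl])
      fix j assume "j \<in> {..<N}"
      have "(\<Sum>k<N. (rv j $ a * cnj (rv k $ b)) * (if j = k then 1 else 0))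
          = (\<Sum>k<N. if k = j then rv j $ a * cnj (rv k $ b) else 0)"
        by (rule sum.cong) auto
      also have "\<dots> = rv j $ a * cnj (rv j $ b)" using \<open>j \<in> {..<N}\<close> by simp
      finally show "(\<Sum>k<N. (rv j $ a * cnj (rv k $ b)) * (if j = k then 1 else 0)) = rv j $ a * cnj (rv j $ b)" .
    qed
    also have "\<dots> = (if a = b then 1 else 0)"
      unfolding N_def by (rule completeness[OF orv])
    finally show ?thesis .
  qed
  then have "cadj U ** U = mat 1" by (simp add: vec_eq_iff mat_def)
  then show ?thesis by (simp add: unitary_def U_def)
qed

theorem mainTheorem1:
  fixes H \<rho> :: "complex^'n^'n"
    and I :: "'i set" and Obs :: "'i \<Rightarrow> complex^'n^'n" and ov :: "'i \<Rightarrow> complex"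
  assumes "hermitian H"
    and "finite I"
    and "\<forall>i\<in>I. hermitian (Obs i)"
    and "density \<rho>"
    and "\<forall>i\<in>I. ov i = trace (\<rho> ** Obs i)"
  shows "(\<forall>U. unitary U \<longrightarrow>
            (INF X\<in>feasible I Obs ov. work H X U)
              \<le> (INF X\<in>feasible I Obs ov. SUP V\<in>{V. unitary V}. work H X V)
          \<and> (INF X\<in>feasible I Obs ov. SUP V\<in>{V. unitary V}. work H X V) \<le> ergotropy \<rho> H)
       \<and> (\<forall>\<rho>t rt rv E ev.
            \<rho>t \<in> feasible I Obs ov
          \<and> (\<forall>j<CARD('n). \<forall>k<CARD('n). cinner_vec (rv j) (rv k) = (if j = k then 1 else 0))
          \<and> (\<forall>j<CARD('n). \<forall>k<CARD('n). cinner_vec (ev j) (ev k) = (if j = k then 1 else 0))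
          \<and> \<rho>t = (\<Sum>j<CARD('n). rt j *\<^sub>R outer (rv j) (rv j))
          \<and> H = (\<Sum>j<CARD('n). E j *\<^sub>R outer (ev j) (ev j))
          \<and> (\<forall>j k. j \<le> k \<and> k < CARD('n) \<longrightarrow> rt k \<le> rt j)
          \<and> (\<forall>j k. j \<le> k \<and> k < CARD('n) \<longrightarrow> E j \<le> E k)
          \<longrightarrow> (INF X\<in>feasible I Obs ov.
                 work H X (\<Sum>j<CARD('n). outer (ev j) (rv j))) \<le> ergotropy \<rho> H)"
proof -
  define F where "F = feasible I Obs ov"
  define Uns where "Uns = {V :: complex^'n^'n. unitary V}"
  define B where "B = 4 * (\<Sum>i\<in>UNIV. \<Sum>k\<in>UNIV. cmod (H$i$k))"
  define S where "S = (\<lambda>X. SUP V\<in>Uns. work H X V)"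
  have rhoF: "\<rho> \<in> F" using assms(4,5) by (simp add: F_def feasible_def density_def)
  then have Fne: "F \<noteq> {}" by blast
  have wb: "\<bar>work H X V\<bar> \<le> B" if "X \<in> F" "unitary V" for X V
    using work_bound[of X V H] that by (simp add: F_def feasible_def B_def)
  have bddA: "bdd_above (work H X ` Uns)" if "X \<in> F" for X
  proof (rule bdd_aboveI2)
    fix V assume "V \<in> Uns"
    then have "\<bar>work H X V\<bar> \<le> B" using wb[OF that] by (simp add: Uns_def)
    then show "work H X V \<le> B" by simp
  qed
  have Sup_up: "work H X V \<le> S X" if "X \<in> F" "unitary V" for X V
    unfolding S_def by (rule cSUP_upper) (use that bddA in \<open>auto simp: Uns_def\<close>)
  have Sge: "0 \<le> S X" if "X \<in> F" for X
    using Sup_up[OF that unitary_one] work_one by metis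
  have part1: "(INF X\<in>F. work H X U) \<le> (INF X\<in>F. S X) \<and> (INF X\<in>F. S X) \<le> ergotropy \<rho> H"
    if "unitary U" for U
  proof
    have bb: "bdd_below ((\<lambda>X. work H X U) ` F)"
    proof (rule bdd_belowI2)
      fix X assume "X \<in> F"
      then have "\<bar>work H X U\<bar> \<le> B" using wb that by blast
      then show "- B \<le> work H X U" by simp
    qed
    show "(INF X\<in>F. work H X U) \<le> (INF X\<in>F. S X)"
      by (rule cINF_mono[OF Fne bb]) (use Sup_up that in blast)
    have bb2: "bdd_below (S ` F)"
    proof (rule bdd_belowI2)
      fix X assume "X \<in> F"
      then show "0 \<le> S X" using Sge by blast
    qed
    have "(INF X\<in>F. S X) \<le> S \<rho>" by (rule cINF_lower[OF bb2 rhoF])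
    also have "S \<rho> = ergotropy \<rho> H" by (simp add: S_def Uns_def ergotropy_def)
    finally show "(INF X\<in>F. S X) \<le> ergotropy \<rho> H" .
  qed
  show ?thesis
  proof (intro conjI allI impI)
    fix U :: "complex^'n^'n" assume "unitary U"
    from part1[OF this] show "(INF X\<in>feasible I Obs ov. work H X U)
              \<le> (INF X\<in>feasible I Obs ov. SUP V\<in>{V. unitary V}. work H X V)"
      and "(INF X\<in>feasible I Obs ov. SUP V\<in>{V. unitary V}. work H X V) \<le> ergotropy \<rho> H"
      by (simp_all add: F_def S_def Uns_def)
  next
    fix \<rho>t rt E and rv ev :: "nat \<Rightarrow> complex^'n"
    assume h: "\<rho>t \<in> feasible I Obs ov
          \<and> (\<forall>j<CARD('n). \<forall>k<CARD('n). cinner_vec (rv j) (rv k) = (if j = k then 1 else 0))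
          \<and> (\<forall>j<CARD('n). \<forall>k<CARD('n). cinner_vec (ev j) (ev k) = (if j = k then 1 else 0))
          \<and> \<rho>t = (\<Sum>j<CARD('n). rt j *\<^sub>R outer (rv j) (rv j))
          \<and> H = (\<Sum>j<CARD('n). E j *\<^sub>R outer (ev j) (ev j))
          \<and> (\<forall>j k. j \<le> k \<and> k < CARD('n) \<longrightarrow> rt k \<le> rt j)
          \<and> (\<forall>j k. j \<le> k \<and> k < CARD('n) \<longrightarrow> E j \<le> E k)"
    then have u: "unitary (\<Sum>j<CARD('n). outer (ev j) (rv j))"
      using ustar_unitary by blast
    from part1[OF u] show "(INF X\<in>feasible I Obs ov.
                 work H X (\<Sum>j<CARD('n). outer (ev j) (rv j))) \<le> ergotropy \<rho> H"
      unfolding F_def by linarith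
  qed
qed

end
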